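(* Every infinite sequence $(w_n)_{n\in\mathbb N}$ of words over a finite alphabet $A$ admits a subsequence that is $(\vec u,\vec B)$-adequate for some factorization pattern $(\vec u,\vec B)$.
   Context: For $B\subseteq A$, $B^{\circledast}$ is the set of words over $B$ in which every symbol of $B$ occurs. A factorization pattern is $(\vec u,\vec B)$ with $\vec u=(u_0,\dots,u_p)\in(A^* )^{p+1}$, $\vec B=(B_1,\dots,B_p)$ nonempty subsets of $A$, $p\ge0$. $L(\vec u,\vec B,n)=u_0(B_1^{\circledast})^nu_1\cdots(B_p^{\circledast})^nu_p$. A sequence $(w_n)_n$ is $(\vec u,\vec B)$-adequate if $w_n\in L(\vec u,\vec B,n)$ for every $n$. *)

theory Defs
  imports Main
begin

definition full_words :: "'a set \<Rightarrow> 'a list set" where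
  "full_words B = {w. set w \<subseteq> B \<and> B \<subseteq> set w}"

definition lang_pow :: "'a list set \<Rightarrow> nat \<Rightarrow> 'a list set" where
  "lang_pow L n = {concat ws | ws. length ws = n \<and> set ws \<subseteq> L}"

text \<open>L(u,B,n) = u0 (B1^full)^n u1 ... (Bp^full)^n up, with u = [u0,...,up], B = [B1,...,Bp].\<close>
fun fact_lang :: "'a list list \<Rightarrow> 'a set list \<Rightarrow> nat \<Rightarrow> 'a list set" where
  "fact_lang [u] [] n = {u}"
| "fact_lang (u # us) (B # Bs) n =
     {u @ x @ y | x y. x \<in> lang_pow (full_words B) n \<and> y \<in> fact_lang us Bs n}"
| "fact_lang _ _ n = {}"

definition fact_pattern :: "'a set \<Rightarrow> 'a list list \<Rightarrow> 'a set list \<Rightarrow> bool" where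
  "fact_pattern A us Bs \<longleftrightarrow> length us = length Bs + 1 \<and> (\<forall>u\<in>set us. set u \<subseteq> A)
     \<and> (\<forall>B\<in>set Bs. B \<noteq> {} \<and> B \<subseteq> A)"

definition adequate :: "'a list list \<Rightarrow> 'a set list \<Rightarrow> (nat \<Rightarrow> 'a list) \<Rightarrow> bool" where
  "adequate us Bs w \<longleftrightarrow> (\<forall>n. w n \<in> fact_lang us Bs n)"

end

theory Submission imports Defs "HOL-Library.Infinite_Set" begin

abbreviation PW :: "'a set \<Rightarrow> nat \<Rightarrow> 'a list set" where
  "PW B k \<equiv> lang_pow (full_words B) k"

lemma PW_0[simp]: "PW B 0 = {[]}"
  by (auto simp: lang_pow_def)

lemma PW_Suc: "PW B (Suc k) = {g @ z | g z. g \<in> full_words B \<and> z \<in> PW B k}"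
proof (intro set_eqI iffI)
  fix x assume "x \<in> PW B (Suc k)"
  then obtain ws where "x = concat ws" "length ws = Suc k" "set ws \<subseteq> full_words B"
    by (auto simp: lang_pow_def)
  then show "x \<in> {g @ z | g z. g \<in> full_words B \<and> z \<in> PW B k}"
    by (cases ws) (auto simp: lang_pow_def)
next
  fix x assume "x \<in> {g @ z | g z. g \<in> full_words B \<and> z \<in> PW B k}"
  then obtain g ws where "x = g @ concat ws" "g \<in> full_words B" "length ws = k" "set ws \<subseteq> full_words B"
    by (auto simp: lang_pow_def)
  then show "x \<in> PW B (Suc k)"
    unfolding lang_pow_def by (intro CollectI exI[of _ "g # ws"]) auto
qed

lemma PW_add_split: "z \<in> PW B (a + b) \<Longrightarrow> \<exists>z1 z2. z = z1 @ z2 \<and> z1 \<in> PW B a \<and> z2 \<in> PW B b"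
proof -
  assume "z \<in> PW B (a + b)"
  then obtain ws where ws: "z = concat ws" "length ws = a + b" "set ws \<subseteq> full_words B"
    by (auto simp: lang_pow_def)
  have "z = concat (take a ws) @ concat (drop a ws)"
    using ws(1) by (metis append_take_drop_id concat_append)
  moreover have "concat (take a ws) \<in> PW B a" using ws
    unfolding lang_pow_def by (intro CollectI exI[of _ "take a ws"]) (auto dest: in_set_takeD)
  moreover have "concat (drop a ws) \<in> PW B b" using ws
    unfolding lang_pow_def by (intro CollectI exI[of _ "drop a ws"]) (auto dest: in_set_dropD)
  ultimately show ?thesis by blast
qed

lemma PW_add: "z1 \<in> PW B a \<Longrightarrow> z2 \<in> PW B b \<Longrightarrow> z1 @ z2 \<in> PW B (a + b)"
proof -
  assume "z1 \<in> PW B a" "z2 \<in> PW B b"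
  then obtain ws1 ws2 where "z1 = concat ws1" "length ws1 = a" "set ws1 \<subseteq> full_words B"
     "z2 = concat ws2" "length ws2 = b" "set ws2 \<subseteq> full_words B"
    by (auto simp: lang_pow_def)
  then show ?thesis
    unfolding lang_pow_def by (intro CollectI exI[of _ "ws1 @ ws2"]) auto
qed

lemma PW_set: "z \<in> PW B k \<Longrightarrow> set z \<subseteq> B"
  unfolding lang_pow_def full_words_def by (clarsimp, fastforce)

lemma PW_1: "PW B 1 = full_words B"
  by (auto simp: PW_Suc)

lemma PW_app_left: "z \<in> PW B (Suc k) \<Longrightarrow> set \<alpha> \<subseteq> B \<Longrightarrow> \<alpha> @ z \<in> PW B (Suc k)"
proof -
  assume z: "z \<in> PW B (Suc k)" and a: "set \<alpha> \<subseteq> B"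
  then obtain g y where "z = g @ y" "g \<in> full_words B" "y \<in> PW B k" by (auto simp: PW_Suc)
  moreover have "\<alpha> @ g \<in> full_words B" using a \<open>g \<in> full_words B\<close> by (auto simp: full_words_def)
  ultimately show ?thesis unfolding PW_Suc by (intro CollectI exI[of _ "\<alpha> @ g"] exI[of _ y]) simp
qed

lemma PW_app_right: "z \<in> PW B (Suc k) \<Longrightarrow> set \<alpha> \<subseteq> B \<Longrightarrow> z @ \<alpha> \<in> PW B (Suc k)"
proof -
  assume z: "z \<in> PW B (Suc k)" and a: "set \<alpha> \<subseteq> B"
  from PW_add_split[of z B k 1] z obtain z1 z2 where "z = z1 @ z2" "z1 \<in> PW B k" "z2 \<in> PW B 1"
    by auto
  moreover have "z2 @ \<alpha> \<in> PW B 1"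
    using \<open>z2 \<in> PW B 1\<close> a unfolding PW_1 by (auto simp: full_words_def)
  ultimately show ?thesis using PW_add[of z1 B k "z2 @ \<alpha>" 1] by simp
qed

lemma PW_mono: "z \<in> PW B k \<Longrightarrow> 1 \<le> n \<Longrightarrow> n \<le> k \<Longrightarrow> z \<in> PW B n"
proof -
  assume z: "z \<in> PW B k" and n: "1 \<le> n" "n \<le> k"
  then obtain z1 z2 where "z = z1 @ z2" "z1 \<in> PW B n" "z2 \<in> PW B (k - n)"
    using PW_add_split[of z B n "k - n"] by auto
  moreover from n obtain n' where "n = Suc n'" by (cases n) auto
  ultimately show ?thesis using PW_app_right PW_set by metis
qed


lemma fl_0: "length us = length Bs + 1 \<Longrightarrow> fact_lang us Bs 0 = {concat us}"
proof (induction Bs arbitrary: us)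
  case Nil then show ?case by (cases us) auto
next
  case (Cons B Bs)
  then obtain u us' where "us = u # us'" by (cases us) auto
  with Cons show ?case by auto
qed

definition join :: "'a list list \<Rightarrow> 'a list list \<Rightarrow> 'a list list" where
  "join us1 us2 = butlast us1 @ [last us1 @ hd us2] @ tl us2"

lemma fl_app:
  "x \<in> fact_lang us1 Bs1 n \<Longrightarrow> y \<in> fact_lang us2 Bs2 n \<Longrightarrow> length us1 = length Bs1 + 1
   \<Longrightarrow> length us2 = length Bs2 + 1 \<Longrightarrow> x @ y \<in> fact_lang (join us1 us2) (Bs1 @ Bs2) n"
proof (induction Bs1 arbitrary: us1 x)
  case Nil
  then obtain u where u: "us1 = [u]" by (cases us1) auto
  with Nil have x: "x = u" by auto
  obtain v us2' where v: "us2 = v # us2'" using Nil by (cases us2) auto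
  show ?case
  proof (cases Bs2)
    case Nil
    with Nil.prems v have "us2' = []" by auto
    with Nil.prems u x v \<open>Bs2 = []\<close> show ?thesis by (auto simp: join_def)
  next
    case (Cons B Bs2')
    with Nil.prems v obtain g t where "y = v @ g @ t" "g \<in> PW B n" "t \<in> fact_lang us2' Bs2' n"
      by auto
    then show ?thesis using u x v Cons by (auto simp: join_def)
  qed
next
  case (Cons B Bs1)
  then obtain u us1' where u: "us1 = u # us1'" by (cases us1) auto
  with Cons.prems have ne: "us1' \<noteq> []" by auto
  from Cons.prems u obtain g t where gt: "x = u @ g @ t" "g \<in> PW B n" "t \<in> fact_lang us1' Bs1 n"
    by auto
  have "t @ y \<in> fact_lang (join us1' us2) (Bs1 @ Bs2) n"
    using Cons.IH[OF gt(3) Cons.prems(2)] Cons.prems u by auto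
  moreover have "join us1 us2 = u # join us1' us2" using u ne by (simp add: join_def)
  ultimately show ?case using gt by auto
qed


lemma join_concat: "us1 \<noteq> [] \<Longrightarrow> us2 \<noteq> [] \<Longrightarrow> concat (join us1 us2) = concat us1 @ concat us2"
proof -
  assume ne: "us1 \<noteq> []" "us2 \<noteq> []"
  have "concat us1 @ concat us2 = concat (butlast us1 @ [last us1]) @ concat (hd us2 # tl us2)"
    using ne by simp
  then show ?thesis by (simp add: join_def)
qed

definition trail :: "'a list \<Rightarrow> 'a list list" where
  "trail y = map (\<lambda>a. [a]) y @ [[]]"

lemma trail_Nil[simp]: "trail [] = [[]]" by (simp add: trail_def)
lemma trail_Cons[simp]: "trail (a # y) = [a] # trail y" by (simp add: trail_def)
lemma trail_ne[simp]: "trail y \<noteq> []" by (simp add: trail_def)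
lemma concat_trail[simp]: "concat (trail y) = y" by (induction y) auto
lemma length_trail[simp]: "length (trail y) = length y + 1" by (simp add: trail_def)

lemma full_split: "g \<in> full_words B \<Longrightarrow> a \<in> B \<Longrightarrow> \<exists>\<alpha> \<beta>. g = \<alpha> @ a # \<beta> \<and> set \<alpha> \<subseteq> B \<and> set \<beta> \<subseteq> B"
proof -
  assume g: "g \<in> full_words B" "a \<in> B"
  then have "a \<in> set g" by (auto simp: full_words_def)
  then obtain \<alpha> \<beta> where "g = \<alpha> @ a # \<beta>" by (meson split_list)
  with g show ?thesis by (auto simp: full_words_def)
qed


lemma join_pattern:
  "fact_pattern A us1 Bs1 \<Longrightarrow> fact_pattern A us2 Bs2 \<Longrightarrow> fact_pattern A (join us1 us2) (Bs1 @ Bs2)"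
proof -
  assume a: "fact_pattern A us1 Bs1" "fact_pattern A us2 Bs2"
  then have l: "length us1 = length Bs1 + 1" "length us2 = length Bs2 + 1"
    and s1: "\<forall>u\<in>set us1. set u \<subseteq> A" "\<forall>u\<in>set us2. set u \<subseteq> A"
    and b: "\<forall>B\<in>set Bs1. B \<noteq> {} \<and> B \<subseteq> A" "\<forall>B\<in>set Bs2. B \<noteq> {} \<and> B \<subseteq> A"
    unfolding fact_pattern_def by simp_all
  have ne: "us1 \<noteq> []" "us2 \<noteq> []" using l by auto
  have len: "length (join us1 us2) = length (Bs1 @ Bs2) + 1"
    using l ne unfolding join_def by simp
  have "\<forall>u\<in>set (join us1 us2). set u \<subseteq> A"
  proof
    fix u assume "u \<in> set (join us1 us2)"
    then have "u \<in> set (butlast us1) \<or> u = last us1 @ hd us2 \<or> u \<in> set (tl us2)"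
      unfolding join_def by (simp, blast)
    then show "set u \<subseteq> A"
    proof (elim disjE)
      assume "u \<in> set (butlast us1)" then have "u \<in> set us1" by (rule in_set_butlastD)
      then show ?thesis by (rule bspec[OF s1(1)])
    next
      assume "u = last us1 @ hd us2" moreover have "last us1 \<in> set us1" "hd us2 \<in> set us2" using ne by simp_all
      ultimately show ?thesis using s1 by (simp add: Ball_def)
    next
      assume "u \<in> set (tl us2)" then have "u \<in> set us2" using ne by (simp add: list.set_sel(2))
      then show ?thesis by (rule bspec[OF s1(2)])
    qed
  qed
  moreover have "\<forall>B\<in>set (Bs1 @ Bs2). B \<noteq> {} \<and> B \<subseteq> A" using b by auto
  ultimately show ?thesis using len unfolding fact_pattern_def by blast
qed

lemma key:
  "z \<in> PW B k \<Longrightarrow> 1 \<le> n \<Longrightarrow> set y \<subseteq> B \<Longrightarrow> (length y + 1) * (n + 1) \<le> k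
   \<Longrightarrow> \<exists>g t. z = g @ t \<and> g \<in> PW B n \<and> t \<in> fact_lang (trail y) (replicate (length y) B) n"
proof (induction y arbitrary: z k)
  case Nil
  then have "z \<in> PW B n" using PW_mono[of z B k n] by simp
  then show ?case by (intro exI[of _ z] exI[of _ "[]"]) simp
next
  case (Cons a y)
  have k: "k = n + (1 + (k - n - 1))" using Cons.prems by simp
  obtain z1 zr where "z = z1 @ zr" "z1 \<in> PW B n" "zr \<in> PW B (1 + (k - n - 1))"
    using PW_add_split[of z B n "1 + (k - n - 1)"] Cons.prems(1) k by auto
  moreover obtain g z2 where "zr = g @ z2" "g \<in> PW B 1" "z2 \<in> PW B (k - n - 1)"
    using PW_add_split[OF \<open>zr \<in> PW B (1 + (k - n - 1))\<close>] by auto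
  moreover have "g \<in> full_words B" using \<open>g \<in> PW B 1\<close> PW_1 by metis
  moreover obtain \<alpha> \<beta> where ab: "g = \<alpha> @ a # \<beta>" "set \<alpha> \<subseteq> B" "set \<beta> \<subseteq> B"
    using full_split[OF \<open>g \<in> full_words B\<close>, of a] Cons.prems(3) by auto
  ultimately have z: "z = (z1 @ \<alpha>) @ [a] @ (\<beta> @ z2)" by simp
  obtain n' where n': "n = Suc n'" using Cons.prems by (cases n) auto
  have g1: "z1 @ \<alpha> \<in> PW B n" using PW_app_right \<open>z1 \<in> PW B n\<close> ab n' by metis
  have kk: "(length y + 1) * (n + 1) \<le> k - n - 1" using Cons.prems(4) by (simp add: algebra_simps)
  then obtain k' where k': "k - n - 1 = Suc k'" using Cons.prems by (cases "k - n - 1") auto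
  have "\<beta> @ z2 \<in> PW B (k - n - 1)" using PW_app_left \<open>z2 \<in> PW B (k - n - 1)\<close> ab k' by metis
  from Cons.IH[OF this Cons.prems(2) _ kk] Cons.prems(3) obtain g' t' where
    "\<beta> @ z2 = g' @ t'" "g' \<in> PW B n" "t' \<in> fact_lang (trail y) (replicate (length y) B) n" by auto
  then have "[a] @ \<beta> @ z2 \<in> fact_lang (trail (a # y)) (replicate (length (a # y)) B) n"
    by auto
  then show ?case using z g1 by blast
qed


lemma fp_Cons: "fact_pattern A (u # us) (B # Bs) \<longleftrightarrow> set u \<subseteq> A \<and> B \<noteq> {} \<and> B \<subseteq> A \<and> fact_pattern A us Bs"
  unfolding fact_pattern_def by (simp add: conj_ac)

lemma fp_Nil: "fact_pattern A us [] \<longleftrightarrow> (\<exists>u. us = [u] \<and> set u \<subseteq> A)"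
  unfolding fact_pattern_def by (cases us) fastforce+

lemma keyL:
  assumes "z \<in> PW B k" "1 \<le> n" "set y \<subseteq> B" "(length y + 1) * (n + 1) \<le> k"
  shows "z \<in> fact_lang ([] # trail y) (B # replicate (length y) B) n"
proof -
  obtain g t where "z = g @ t" "g \<in> PW B n" "t \<in> fact_lang (trail y) (replicate (length y) B) n"
    using key[OF assms] by blast
  then show ?thesis by auto
qed

lemma keyP:
  assumes "B \<noteq> {}" "B \<subseteq> A" "set y \<subseteq> B"
  shows "fact_pattern A ([] # trail y) (B # replicate (length y) B)"
proof -
  have "fact_pattern A (trail y) (replicate (length y) B)"
    using assms(3) proof (induction y)
    case Nil then show ?case by (simp add: fp_Nil)
  next
    case (Cons a y) then show ?case using assms(1,2) by (simp add: fp_Cons subset_iff)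
  qed
  then show ?thesis using assms by (simp add: fp_Cons)
qed

lemma fp_ne: "fact_pattern A us Bs \<Longrightarrow> us \<noteq> []"
  by (cases us) (simp_all add: fact_pattern_def)

lemma fp_len: "fact_pattern A us Bs \<Longrightarrow> length us = length Bs + 1"
  by (simp add: fact_pattern_def)

lemma single_pattern: "set u \<subseteq> A \<Longrightarrow> fact_pattern A [u] []"
  unfolding fact_pattern_def by simp

lemma refine:
  "fact_pattern A us Bs \<Longrightarrow> s \<in> fact_lang us Bs m \<Longrightarrow>
   \<exists>us' Bs' N. fact_pattern A us' Bs' \<and> concat us' = s \<and>
     (\<forall>n k. 1 \<le> n \<longrightarrow> N n \<le> k \<longrightarrow> fact_lang us Bs k \<subseteq> fact_lang us' Bs' n)"
proof (induction Bs arbitrary: us s)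
  case Nil
  then obtain u where u: "us = [u]" by (auto simp: fp_Nil)
  with Nil show ?case by (intro exI[of _ "[u]"] exI[of _ "[]"] exI[of _ "\<lambda>_. 0"]) auto
next
  case (Cons B Bs)
  then have l: "length us = Suc (length Bs) + 1" unfolding fact_pattern_def by simp
  then obtain u us1 where u: "us = u # us1" by (cases us) auto
  with l have ne: "us1 \<noteq> []" by auto
  have pu: "set u \<subseteq> A" and p1: "fact_pattern A us1 Bs" and pB: "B \<noteq> {}" "B \<subseteq> A"
    using Cons.prems(1) u by (simp_all add: fp_Cons)
  from Cons.prems(2) u obtain y s' where ys: "s = u @ y @ s'" "y \<in> PW B m" "s' \<in> fact_lang us1 Bs m"
    by auto
  from Cons.IH[OF p1 ys(3)] obtain us' Bs' N where
    ih: "fact_pattern A us' Bs'" "concat us' = s'"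
        "\<forall>n k. 1 \<le> n \<longrightarrow> N n \<le> k \<longrightarrow> fact_lang us1 Bs k \<subseteq> fact_lang us' Bs' n"
    by blast
  have sy: "set y \<subseteq> B" by (rule PW_set[OF ys(2)])
  define K where "K = [] # trail y"
  define KB where "KB = B # replicate (length y) B"
  have pK: "fact_pattern A K KB" unfolding K_def KB_def by (rule keyP[OF pB sy])
  have ps: "fact_pattern A [u] []" by (rule single_pattern[OF pu])
  let ?us = "join (join [u] K) us'"
  let ?Bs = "([] @ KB) @ Bs'"
  have pat: "fact_pattern A ?us ?Bs" using join_pattern[OF join_pattern[OF ps pK] ih(1)] .
  have neus': "us' \<noteq> []" using ih(1) by (rule fp_ne)
  have c1: "concat (join [u] K) = u @ y"
    using join_concat[of "[u]" K] by (simp add: K_def)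
  have "concat ?us = s"
    using join_concat[of "join [u] K" us'] neus' c1 ys(1) ih(2) by (simp add: join_def)
  moreover have "\<forall>n k. 1 \<le> n \<longrightarrow> max (N n) ((length y + 1) * (n + 1)) \<le> k \<longrightarrow>
      fact_lang us (B # Bs) k \<subseteq> fact_lang ?us ?Bs n"
  proof (intro allI impI subsetI)
    fix n k x assume n: "1 \<le> n" and k: "max (N n) ((length y + 1) * (n + 1)) \<le> k"
      and x: "x \<in> fact_lang us (B # Bs) k"
    from x u obtain z t where zt: "x = u @ z @ t" "z \<in> PW B k" "t \<in> fact_lang us1 Bs k" by auto
    have k1: "(length y + 1) * (n + 1) \<le> k" "N n \<le> k" using k by simp_all
    have z: "z \<in> fact_lang K KB n" unfolding K_def KB_def using keyL[OF zt(2) n sy k1(1)] .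
    have t: "t \<in> fact_lang us' Bs' n" using ih(3) n k1(2) zt(3) by blast
    have uz: "u @ z \<in> fact_lang (join [u] K) ([] @ KB) n"
      using fl_app[of u "[u]" "[]" n z K KB] z fp_len[OF pK] by simp
    have "(u @ z) @ t \<in> fact_lang ?us ?Bs n"
      using fl_app[OF uz t fp_len[OF join_pattern[OF ps pK]] fp_len[OF ih(1)]] .
    then show "x \<in> fact_lang ?us ?Bs n" using zt by simp
  qed
  ultimately show ?case using pat
    by (intro exI[of _ ?us] exI[of _ ?Bs] exI[of _ "\<lambda>n. max (N n) ((length y + 1) * (n + 1))"]) simp
qed


lemma sm_comp: "strict_mono f \<Longrightarrow> strict_mono g \<Longrightarrow> strict_mono (f \<circ> g)"
  unfolding strict_mono_def by simp

definition good :: "'a set \<Rightarrow> (nat \<Rightarrow> 'a list) \<Rightarrow> bool" where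
  "good A w \<longleftrightarrow> (\<exists>\<phi> us Bs. strict_mono \<phi> \<and> fact_pattern A us Bs \<and> adequate us Bs (w \<circ> \<phi>))"

lemma good_sub: "strict_mono \<sigma> \<Longrightarrow> good A (w \<circ> \<sigma>) \<Longrightarrow> good A w"
proof -
  assume s: "strict_mono \<sigma>" and g: "good A (w \<circ> \<sigma>)"
  then obtain \<phi> us Bs where "strict_mono \<phi>" "fact_pattern A us Bs" "adequate us Bs (w \<circ> \<sigma> \<circ> \<phi>)"
    unfolding good_def by blast
  then show ?thesis unfolding good_def using sm_comp[OF s]
    by (intro exI[of _ "\<sigma> \<circ> \<phi>"] exI[of _ us] exI[of _ Bs]) (simp add: o_assoc)
qed

lemma psi_exists: "\<exists>\<psi>::nat\<Rightarrow>nat. strict_mono \<psi> \<and> \<psi> 0 = 0 \<and> (\<forall>n. 1 \<le> n \<longrightarrow> N n \<le> \<psi> n)"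
proof -
  define \<psi> where "\<psi> n = n + (\<Sum>i<n. N (Suc i))" for n
  have "strict_mono \<psi>" unfolding strict_mono_Suc_iff \<psi>_def by simp
  moreover have "\<psi> 0 = 0" by (simp add: \<psi>_def)
  moreover have "N n \<le> \<psi> n" if n1: "1 \<le> n" for n
  proof -
    obtain m where m: "n = Suc m" using n1 by (cases n) simp_all
    have "N (Suc m) \<le> (\<Sum>i<Suc m. N (Suc i))" by simp
    then show ?thesis unfolding \<psi>_def m by linarith
  qed
  ultimately show ?thesis by blast
qed

lemma seq_exists:
  assumes "\<forall>k m. \<exists>n>m. P k n"
  shows "\<exists>\<sigma>::nat\<Rightarrow>nat. strict_mono \<sigma> \<and> (\<forall>k. P k (\<sigma> k))"
proof -
  define \<sigma> where "\<sigma> = rec_nat (SOME n. n > 0 \<and> P 0 n) (\<lambda>k prev. SOME n. n > prev \<and> P (Suc k) n)"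
  have s0: "\<sigma> 0 = (SOME n. n > 0 \<and> P 0 n)" by (simp add: \<sigma>_def)
  have sS: "\<sigma> (Suc k) = (SOME n. n > \<sigma> k \<and> P (Suc k) n)" for k by (simp add: \<sigma>_def)
  have a: "\<exists>n. n > m \<and> P k n" for k m using assms by blast
  have "\<sigma> (Suc k) > \<sigma> k \<and> P (Suc k) (\<sigma> (Suc k))" for k
    unfolding sS by (rule someI_ex[OF a])
  moreover have "P 0 (\<sigma> 0)" unfolding s0 using someI_ex[OF a[of 0 0]] by blast
  ultimately have "P k (\<sigma> k)" for k by (cases k) auto
  moreover have "strict_mono \<sigma>" unfolding strict_mono_Suc_iff using \<open>\<And>k. \<sigma> (Suc k) > \<sigma> k \<and> _\<close> by blast
  ultimately show ?thesis by blast
qed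

lemma RP:
  assumes "fact_pattern A us Bs" "\<And>n. v n \<in> fact_lang us Bs (\<theta> n)" "\<And>n. n \<le> \<theta> n"
  shows "\<exists>us' Bs' N. fact_pattern A us' Bs' \<and>
     (\<forall>\<psi>. \<psi> 0 = 0 \<longrightarrow> (\<forall>n. 1 \<le> n \<longrightarrow> N n \<le> \<psi> n) \<longrightarrow> adequate us' Bs' (v \<circ> \<psi>))"
proof -
  obtain us' Bs' N where r: "fact_pattern A us' Bs'" "concat us' = v 0"
    "\<forall>n k. 1 \<le> n \<longrightarrow> N n \<le> k \<longrightarrow> fact_lang us Bs k \<subseteq> fact_lang us' Bs' n"
    using refine[OF assms(1) assms(2)[of 0]] by blast
  have "adequate us' Bs' (v \<circ> \<psi>)" if p: "\<psi> 0 = 0" "\<forall>n. 1 \<le> n \<longrightarrow> N n \<le> \<psi> n" for \<psi>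
    unfolding adequate_def
  proof
    fix n
    show "(v \<circ> \<psi>) n \<in> fact_lang us' Bs' n"
    proof (cases "n = 0")
      case True
      then show ?thesis using p(1) r(2) fl_0[OF fp_len[OF r(1)]] by simp
    next
      case False
      then have n: "1 \<le> n" by simp
      have "N n \<le> \<theta> (\<psi> n)" using p(2) n assms(3)[of "\<psi> n"] by (meson le_trans)
      then have "fact_lang us Bs (\<theta> (\<psi> n)) \<subseteq> fact_lang us' Bs' n" using r(3) n by blast
      then show ?thesis using assms(2)[of "\<psi> n"] by auto
    qed
  qed
  then show ?thesis using r(1) by blast
qed


lemma comb:
  assumes gx: "good A x" and gy: "\<And>\<sigma>. strict_mono \<sigma> \<Longrightarrow> good A (y \<circ> \<sigma>)" and c: "c \<in> A"
  shows "good A (\<lambda>n. x n @ [c] @ y n)"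
proof -
  obtain \<phi>1 u1 B1 where g1: "strict_mono \<phi>1" "fact_pattern A u1 B1" "adequate u1 B1 (x \<circ> \<phi>1)"
    using gx unfolding good_def by blast
  obtain \<phi>2 u2 B2 where g2: "strict_mono \<phi>2" "fact_pattern A u2 B2" "adequate u2 B2 (y \<circ> \<phi>1 \<circ> \<phi>2)"
    using gy[OF g1(1)] unfolding good_def by blast
  have v1: "(x \<circ> \<phi>1 \<circ> \<phi>2) n \<in> fact_lang u1 B1 (\<phi>2 n)" for n
    using g1(3) unfolding adequate_def by simp
  have v2: "(y \<circ> \<phi>1 \<circ> \<phi>2) n \<in> fact_lang u2 B2 (id n)" for n
    using g2(3) unfolding adequate_def by simp
  obtain u1' B1' N1 where r1: "fact_pattern A u1' B1'"
     "\<forall>\<psi>. \<psi> 0 = 0 \<longrightarrow> (\<forall>n. 1 \<le> n \<longrightarrow> N1 n \<le> \<psi> n) \<longrightarrow> adequate u1' B1' (x \<circ> \<phi>1 \<circ> \<phi>2 \<circ> \<psi>)"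
    using RP[OF g1(2) v1 strict_mono_imp_increasing[OF g2(1)]] by blast
  have id_le: "\<And>n::nat. n \<le> id n" by simp
  obtain u2' B2' N2 where r2: "fact_pattern A u2' B2'"
     "\<forall>\<psi>. \<psi> 0 = 0 \<longrightarrow> (\<forall>n. 1 \<le> n \<longrightarrow> N2 n \<le> \<psi> n) \<longrightarrow> adequate u2' B2' (y \<circ> \<phi>1 \<circ> \<phi>2 \<circ> \<psi>)"
    using RP[OF g2(2) v2 id_le] by blast
  obtain \<psi> :: "nat \<Rightarrow> nat" where p: "strict_mono \<psi>" "\<psi> 0 = 0" "\<forall>n. 1 \<le> n \<longrightarrow> N1 n + N2 n \<le> \<psi> n"
    using psi_exists[of "\<lambda>n. N1 n + N2 n"] by blast
  have p1: "\<forall>n. 1 \<le> n \<longrightarrow> N1 n \<le> \<psi> n" and p2: "\<forall>n. 1 \<le> n \<longrightarrow> N2 n \<le> \<psi> n" using p(3) by auto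
  have a1: "adequate u1' B1' (x \<circ> \<phi>1 \<circ> \<phi>2 \<circ> \<psi>)" using r1(2) p(2) p1 by blast
  have a2: "adequate u2' B2' (y \<circ> \<phi>1 \<circ> \<phi>2 \<circ> \<psi>)" using r2(2) p(2) p2 by blast
  have pc: "fact_pattern A [[c]] []" using single_pattern[of "[c]" A] c by simp
  define us where "us = join (join u1' [[c]]) u2'"
  define Bs where "Bs = (B1' @ []) @ B2'"
  have pat: "fact_pattern A us Bs" unfolding us_def Bs_def
    by (rule join_pattern[OF join_pattern[OF r1(1) pc] r2(1)])
  have "adequate us Bs ((\<lambda>n. x n @ [c] @ y n) \<circ> (\<phi>1 \<circ> \<phi>2 \<circ> \<psi>))"
    unfolding adequate_def
  proof
    fix n
    let ?m = "\<phi>1 (\<phi>2 (\<psi> n))"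
    have m1: "x ?m \<in> fact_lang u1' B1' n" using a1 unfolding adequate_def by simp
    have m2: "y ?m \<in> fact_lang u2' B2' n" using a2 unfolding adequate_def by simp
    have mc: "[c] \<in> fact_lang [[c]] [] n" by simp
    have "x ?m @ [c] \<in> fact_lang (join u1' [[c]]) (B1' @ []) n"
      using fl_app[OF m1 mc fp_len[OF r1(1)]] by simp
    from fl_app[OF this m2 fp_len[OF join_pattern[OF r1(1) pc]] fp_len[OF r2(1)]]
    show "((\<lambda>n. x n @ [c] @ y n) \<circ> (\<phi>1 \<circ> \<phi>2 \<circ> \<psi>)) n \<in> fact_lang us Bs n"
      unfolding us_def Bs_def by simp
  qed
  moreover have "strict_mono (\<phi>1 \<circ> \<phi>2 \<circ> \<psi>)" using sm_comp g1(1) g2(1) p(1) by blast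
  ultimately show ?thesis unfolding good_def using pat by blast
qed


lemma inf_seq: "infinite (S::nat set) \<Longrightarrow> \<exists>\<sigma>::nat\<Rightarrow>nat. strict_mono \<sigma> \<and> (\<forall>k. \<sigma> k \<in> S)"
  using seq_exists[of "\<lambda>k n. n \<in> S"] by (simp add: infinite_nat_iff_unbounded)

lemma pigeon:
  assumes "finite F" "\<forall>k::nat. f k \<in> F"
  shows "\<exists>D (\<tau>::nat\<Rightarrow>nat). strict_mono \<tau> \<and> (\<forall>k. f (\<tau> k) = D)"
proof -
  have "range f \<subseteq> F" using assms(2) by blast
  then have "finite (range f)" using assms(1) by (rule finite_subset)
  then obtain D where "infinite (f -` {D})" by (rule inf_img_fin_domE[OF _ infinite_UNIV_nat])
  then obtain \<tau> :: "nat \<Rightarrow> nat" where t: "strict_mono \<tau>" "\<forall>k. \<tau> k \<in> f -` {D}"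
    using inf_seq by blast
  have "\<forall>k. f (\<tau> k) = D" using t(2) by simp
  then show ?thesis using t(1) by blast
qed

lemma decomp: "C \<subseteq> set w \<Longrightarrow> C \<noteq> {} \<Longrightarrow> \<exists>p c R. w = p @ [c] @ R \<and> C \<subseteq> set (p @ [c]) \<and> \<not> C \<subseteq> set p"
proof (induction w rule: rev_induct)
  case Nil then show ?case by simp
next
  case (snoc a w)
  show ?case
  proof (cases "C \<subseteq> set w")
    case True
    then obtain p c R where "w = p @ [c] @ R" "C \<subseteq> set (p @ [c])" "\<not> C \<subseteq> set p"
      using snoc by blast
    then show ?thesis by (intro exI[of _ p] exI[of _ c] exI[of _ "R @ [a]"]) simp
  next
    case False
    then show ?thesis using snoc.prems by (intro exI[of _ w] exI[of _ a] exI[of _ "[]"]) simp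
  qed
qed

lemma fl_single_block: "z \<in> PW C m \<Longrightarrow> z \<in> fact_lang [[],[]] [C] m"
  by simp

lemma main: "finite C \<Longrightarrow> C \<subseteq> A \<Longrightarrow> \<forall>n. set (w n) \<subseteq> C \<Longrightarrow> good A w"
proof (induction C arbitrary: w rule: finite_psubset_induct)
  case (psubset C)
  show ?case
  proof (cases "C = {}")
    case True
    then have "w n = []" for n using psubset.prems by auto
    then have "adequate [[]] [] (w \<circ> id)" unfolding adequate_def by simp
    moreover have "fact_pattern A [[]] []" unfolding fact_pattern_def by simp
    moreover have "strict_mono (id :: nat \<Rightarrow> nat)" by (simp add: strict_mono_def)
    ultimately show ?thesis unfolding good_def by blast
  next
    case Cne: False
    have sub: "good A w'" if inf: "infinite {n. \<not> C \<subseteq> set (w' n)}" and sw: "\<forall>n. set (w' n) \<subseteq> C" for w' :: "nat \<Rightarrow> 'a list"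
    proof -
      obtain \<sigma> :: "nat \<Rightarrow> nat" where \<sigma>: "strict_mono \<sigma>" "\<forall>k. \<sigma> k \<in> {n. \<not> C \<subseteq> set (w' n)}"
        using inf_seq[OF inf] by blast
      have "\<forall>k. set (w' (\<sigma> k)) \<in> Pow C" using sw by simp
      then obtain D and \<tau> :: "nat \<Rightarrow> nat" where \<tau>: "strict_mono \<tau>" "\<forall>k. set (w' (\<sigma> (\<tau> k))) = D"
        using pigeon[of "Pow C" "\<lambda>k. set (w' (\<sigma> k))"] psubset.hyps(1) by auto
      have "D \<subset> C" using \<tau>(2) \<sigma>(2) sw by (metis mem_Collect_eq psubsetI)
      moreover have "D \<subseteq> A" using \<open>D \<subset> C\<close> psubset.prems(1) by blast
      moreover have "\<forall>n. set ((w' \<circ> \<sigma> \<circ> \<tau>) n) \<subseteq> D" using \<tau>(2) by simp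
      ultimately have "good A (w' \<circ> \<sigma> \<circ> \<tau>)" by (rule psubset.IH)
      then show ?thesis using good_sub \<sigma>(1) \<tau>(1) by metis
    qed
    have Q: "\<forall>w' :: nat \<Rightarrow> 'a list. (\<forall>n. set (w' n) \<subseteq> C) \<longrightarrow> (\<forall>n. w' n \<notin> PW C (Suc k)) \<longrightarrow> good A w'" for k
    proof (induction k)
      case 0
      show ?case
      proof (intro allI impI)
        fix w' :: "nat \<Rightarrow> 'a list" assume sw: "\<forall>n. set (w' n) \<subseteq> C" and np: "\<forall>n. w' n \<notin> PW C (Suc 0)"
        have "\<not> C \<subseteq> set (w' n)" for n using np sw PW_1[of C] by (simp add: full_words_def)
        then have "infinite {n. \<not> C \<subseteq> set (w' n)}" by (simp add: infinite_UNIV_nat)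
        then show "good A w'" using sub sw by blast
      qed
    next
      case (Suc k)
      show ?case
      proof (intro allI impI)
        fix w' :: "nat \<Rightarrow> 'a list" assume sw: "\<forall>n. set (w' n) \<subseteq> C" and np: "\<forall>n. w' n \<notin> PW C (Suc (Suc k))"
        show "good A w'"
        proof (cases "infinite {n. \<not> C \<subseteq> set (w' n)}")
          case True then show ?thesis using sub sw by blast
        next
          case False
          then obtain m where m: "{n. \<not> C \<subseteq> set (w' n)} \<subseteq> {..<m}" using finite_nat_bounded by blast
          define w2 where "w2 = w' \<circ> (\<lambda>n. n + m)"
          have sm: "strict_mono (\<lambda>n::nat. n + m)" by (simp add: strict_mono_def)
          have full: "C \<subseteq> set (w2 n)" for n using m unfolding w2_def by auto
          have sw2: "set (w2 n) \<subseteq> C" for n using sw unfolding w2_def by simp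
          have np2: "w2 n \<notin> PW C (Suc (Suc k))" for n using np unfolding w2_def by simp
          have "\<forall>n. \<exists>t. w2 n = fst t @ [fst (snd t)] @ snd (snd t) \<and> C \<subseteq> set (fst t @ [fst (snd t)]) \<and> \<not> C \<subseteq> set (fst t)"
            using decomp[OF full Cne] by fastforce
          then obtain T where T: "\<forall>n. w2 n = fst (T n) @ [fst (snd (T n))] @ snd (snd (T n)) \<and>
               C \<subseteq> set (fst (T n) @ [fst (snd (T n))]) \<and> \<not> C \<subseteq> set (fst (T n))"
            by metis
          define P where "P n = fst (T n)" for n
          define c where "c n = fst (snd (T n))" for n
          define R where "R n = snd (snd (T n))" for n
          have T': "w2 n = P n @ [c n] @ R n" "C \<subseteq> set (P n @ [c n])" "\<not> C \<subseteq> set (P n)" for n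
            using T unfolding P_def c_def R_def by auto
          have cC: "c n \<in> C" for n using sw2[of n] T'(1)[of n] by auto
          have PC: "set (P n) \<subseteq> C - {c n}" for n
          proof -
            have "c n \<notin> set (P n)" using T'(2,3)[of n] by auto
            moreover have "set (P n) \<subseteq> C" using sw2[of n] T'(1)[of n] by auto
            ultimately show ?thesis by blast
          qed
          have RC: "set (R n) \<subseteq> C" for n using sw2[of n] T'(1)[of n] by auto
          have Rnp: "R n \<notin> PW C (Suc k)" for n
          proof
            assume "R n \<in> PW C (Suc k)"
            moreover have fw: "P n @ [c n] \<in> full_words C" unfolding full_words_def
              using T'(2)[of n] PC[of n] cC[of n] by auto
            moreover have "P n @ [c n] \<in> PW C 1" by (subst PW_1) (rule fw)
            ultimately have "(P n @ [c n]) @ R n \<in> PW C (1 + Suc k)" using PW_add by blast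
            then show False using np2[of n] T'(1)[of n] by simp
          qed
          obtain c0 and \<tau> :: "nat \<Rightarrow> nat" where \<tau>: "strict_mono \<tau>" "\<forall>k. c (\<tau> k) = c0"
            using pigeon[of C c] cC psubset.hyps(1) by auto
          have c0: "c0 \<in> C" using cC \<tau>(2) by metis
          have gx: "good A (P \<circ> \<tau>)"
          proof -
            have "C - {c0} \<subset> C" using c0 by blast
            moreover have "C - {c0} \<subseteq> A" using psubset.prems(1) by blast
            moreover have "\<forall>n. set ((P \<circ> \<tau>) n) \<subseteq> C - {c0}" using PC \<tau>(2) by (simp, metis)
            ultimately show ?thesis using psubset.IH by blast
          qed
          have gy: "good A ((R \<circ> \<tau>) \<circ> \<sigma>)" if "strict_mono \<sigma>" for \<sigma>
            using Suc.IH RC Rnp by simp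
          have "good A (\<lambda>n. (P \<circ> \<tau>) n @ [c0] @ (R \<circ> \<tau>) n)"
            by (rule comb[OF gx gy]) (use c0 psubset.prems(1) in blast)+
          moreover have "(\<lambda>n. (P \<circ> \<tau>) n @ [c0] @ (R \<circ> \<tau>) n) = w2 \<circ> \<tau>"
            using T'(1) \<tau>(2) by (auto simp: fun_eq_iff)
          ultimately have "good A (w2 \<circ> \<tau>)" by simp
          then have "good A w2" using good_sub \<tau>(1) by blast
          then show ?thesis unfolding w2_def using good_sub sm by blast
        qed
      qed
    qed
    show ?thesis
    proof (cases "\<exists>k. finite {n. w n \<in> PW C (Suc k)}")
      case True
      then obtain k m where m: "{n. w n \<in> PW C (Suc k)} \<subseteq> {..<m}" using finite_nat_bounded by blast
      define w2 where "w2 = w \<circ> (\<lambda>n. n + m)"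
      have sm: "strict_mono (\<lambda>n::nat. n + m)" by (simp add: strict_mono_def)
      have a1: "\<forall>n. set (w2 n) \<subseteq> C" using psubset.prems(2) unfolding w2_def by simp
      have a2: "\<forall>n. w2 n \<notin> PW C (Suc k)"
      proof
        fix n show "w2 n \<notin> PW C (Suc k)"
        proof
          assume "w2 n \<in> PW C (Suc k)"
          then have "n + m \<in> {n. w n \<in> PW C (Suc k)}" unfolding w2_def by simp
          then show False using m by auto
        qed
      qed
      have "good A w2" using Q[of k] a1 a2 by blast
      then show ?thesis unfolding w2_def using good_sub sm by blast
    next
      case False
      then have "\<forall>k m. \<exists>n>m. w n \<in> PW C (Suc k)" by (simp add: infinite_nat_iff_unbounded)
      then obtain \<sigma> :: "nat \<Rightarrow> nat" where \<sigma>: "strict_mono \<sigma>" "\<forall>k. w (\<sigma> k) \<in> PW C (Suc k)"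
        using seq_exists[of "\<lambda>k n. w n \<in> PW C (Suc k)"] by blast
      have v: "(w \<circ> \<sigma>) n \<in> fact_lang [[],[]] [C] (Suc n)" for n
        using fl_single_block[OF \<sigma>(2)[rule_format, of n]] by simp
      have pp: "fact_pattern A [[],[]] [C]" using Cne psubset.prems(1) by (simp add: fp_Cons fp_Nil)
      have sucle: "\<And>n::nat. n \<le> Suc n" by simp
      obtain us' Bs' N where r: "fact_pattern A us' Bs'"
        "\<forall>\<psi>. \<psi> 0 = 0 \<longrightarrow> (\<forall>n. 1 \<le> n \<longrightarrow> N n \<le> \<psi> n) \<longrightarrow> adequate us' Bs' (w \<circ> \<sigma> \<circ> \<psi>)"
        using RP[OF pp v sucle] by blast
      obtain \<psi> :: "nat \<Rightarrow> nat" where p: "strict_mono \<psi>" "\<psi> 0 = 0" "\<forall>n. 1 \<le> n \<longrightarrow> N n \<le> \<psi> n"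
        using psi_exists[of N] by blast
      have ad: "adequate us' Bs' (w \<circ> \<sigma> \<circ> \<psi>)" using r(2) p(2,3) by simp
      have "good A (w \<circ> \<sigma>)" unfolding good_def
        by (intro exI[of _ \<psi>] exI[of _ us'] exI[of _ Bs'] conjI p(1) r(1) ad)
      then show ?thesis using good_sub \<sigma>(1) by blast
    qed
  qed
qed

theorem lemma3p1:
  fixes A :: "'a set" and w :: "nat \<Rightarrow> 'a list"
  assumes "finite A" and "\<And>n. set (w n) \<subseteq> A"
  shows "\<exists>\<phi> us Bs. strict_mono \<phi> \<and> fact_pattern A us Bs \<and> adequate us Bs (w \<circ> \<phi>)"
proof -
  have "good A w" using main[OF assms(1) order_refl] assms(2) by blast
  then show ?thesis unfolding good_def .
qed

end
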